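(* Let $G=Z_{2^{\lambda_1}}\times\cdots\times Z_{2^{\lambda_n}}$ with $\lambda_1\le\cdots\le\lambda_n$. Then $G$ has an irregular characteristic subgroup if and only if there exist indices $i<j$ with $\lambda_j-\lambda_i\ge 2$ such that neither of the factors $Z_{2^{\lambda_i}}$ nor $Z_{2^{\lambda_j}}$ occurs repeated in this decomposition of $G$ (i.e. $\lambda_i$ and $\lambda_j$ each occur exactly once among $\lambda_1,\dots,\lambda_n$).
   Context: Tuples are ordered componentwise; for $\mathbf a$ with $\mathbf 0\le\mathbf a\le(\lambda_1,\dots,\lambda_n)$, $T(\mathbf a)$ is the set of $(g_1,\dots,g_n)\in G$ with $|g_i|=2^{a_i}$ for all $i$, and $R(\mathbf a)=\bigcup_{\mathbf b\le\mathbf a}T(\mathbf b)$. A subgroup is regular if it equals $R(\mathbf a)$ for some such $\mathbf a$, and irregular otherwise. *)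

theory Defs
  imports "HOL-Algebra.Algebra"
begin

definition Gp :: "nat \<Rightarrow> (nat \<Rightarrow> nat) \<Rightarrow> (nat \<Rightarrow> int) monoid" where
  "Gp n l = product_group {..<n} (\<lambda>i. integer_mod_group (2 ^ l i))"

definition characteristic :: "'a set \<Rightarrow> ('a, 'b) monoid_scheme \<Rightarrow> bool" where
  "characteristic H G \<longleftrightarrow> subgroup H G \<and> (\<forall>\<phi>. \<phi> \<in> iso G G \<longrightarrow> \<phi> ` H = H)"

definition Tset :: "nat \<Rightarrow> (nat \<Rightarrow> nat) \<Rightarrow> (nat \<Rightarrow> nat) \<Rightarrow> (nat \<Rightarrow> int) set" where
  "Tset n l a = {g \<in> carrier (Gp n l).
     \<forall>i<n. group.ord (integer_mod_group (2 ^ l i)) (g i) = 2 ^ a i}"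

definition Rset :: "nat \<Rightarrow> (nat \<Rightarrow> nat) \<Rightarrow> (nat \<Rightarrow> nat) \<Rightarrow> (nat \<Rightarrow> int) set" where
  "Rset n l a = (\<Union>b \<in> {b. \<forall>i<n. b i \<le> a i}. Tset n l b)"

definition regular :: "nat \<Rightarrow> (nat \<Rightarrow> nat) \<Rightarrow> (nat \<Rightarrow> int) set \<Rightarrow> bool" where
  "regular n l H \<longleftrightarrow> (\<exists>a. (\<forall>i<n. a i \<le> l i) \<and> H = Rset n l a)"

end

theory Submission
  imports Defs
begin

lemma Gp_group: "group (Gp n l)"
  unfolding Gp_def by (rule product_group) simp

lemma Gp_carrier: "carrier (Gp n l) = (\<Pi>\<^sub>E k\<in>{..<n}. {0..<2 ^ l k})"
  unfolding Gp_def by (simp add: carrier_integer_mod_group)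

lemma Gp_mult: "g \<otimes>\<^bsub>Gp n l\<^esub> h = (\<lambda>k\<in>{..<n}. (g k + h k) mod 2 ^ l k)"
  unfolding Gp_def by simp

lemma Gp_one: "\<one>\<^bsub>Gp n l\<^esub> = (\<lambda>k\<in>{..<n}. 0)"
  unfolding Gp_def by simp

lemma Gp_inv: "g \<in> carrier (Gp n l) \<Longrightarrow> inv\<^bsub>Gp n l\<^esub> g = (\<lambda>k\<in>{..<n}. (- g k) mod 2 ^ l k)"
  unfolding Gp_def
  by (subst inv_product_group) (auto intro!: restrict_ext simp: carrier_integer_mod_group PiE_iff)

lemma Gp_pow: "g \<in> carrier (Gp n l) \<Longrightarrow> g [^]\<^bsub>Gp n l\<^esub> (c::nat) = (\<lambda>k\<in>{..<n}. (int c * g k) mod 2 ^ l k)"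
proof (induction c)
  case 0
  then show ?case by (simp add: Gp_one)
next
  case (Suc c)
  have "g [^]\<^bsub>Gp n l\<^esub> Suc c = g [^]\<^bsub>Gp n l\<^esub> c \<otimes>\<^bsub>Gp n l\<^esub> g" by simp
  also have "\<dots> = (\<lambda>k\<in>{..<n}. (int (Suc c) * g k) mod 2 ^ l k)"
    using Suc by (auto simp: Gp_mult mod_add_left_eq mod_add_right_eq algebra_simps intro!: restrict_ext)
  finally show ?case .
qed


lemma Gp_carrierD: "g \<in> carrier (Gp n l) \<Longrightarrow> k < n \<Longrightarrow> 0 \<le> g k \<and> g k < 2 ^ l k"
  by (auto simp: Gp_carrier PiE_iff)

lemma Gp_carrier_ext: "g \<in> carrier (Gp n l) \<Longrightarrow> k \<ge> n \<Longrightarrow> g k = undefined"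
  by (auto simp: Gp_carrier PiE_iff extensional_def)

lemma Gp_carrierI: "(\<And>k. k < n \<Longrightarrow> 0 \<le> f k \<and> f k < 2 ^ l k) \<Longrightarrow> (\<lambda>k\<in>{..<n}. f k) \<in> carrier (Gp n l)"
  by (auto simp: Gp_carrier PiE_iff)

definition pe :: "nat \<Rightarrow> nat \<Rightarrow> int \<Rightarrow> (nat \<Rightarrow> int)" where
  "pe n k x = (\<lambda>i\<in>{..<n}. if i = k then x else 0)"

lemma pe_carrier: "0 \<le> x \<Longrightarrow> x < 2 ^ l k \<Longrightarrow> pe n k x \<in> carrier (Gp n l)"
  unfolding pe_def by (rule Gp_carrierI) auto

lemma pe_zero: "pe n k 0 = \<one>\<^bsub>Gp n l\<^esub>"
  unfolding pe_def Gp_one by auto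

lemma box:
  assumes H: "subgroup H (Gp n l)" and g: "g \<in> carrier (Gp n l)"
    and P: "\<And>i. i < n \<Longrightarrow> pe n i (g i) \<in> H"
  shows "g \<in> H"
proof -
  have "(\<lambda>i\<in>{..<n}. if i < j then g i else 0) \<in> H" for j
  proof (induction j)
    case 0
    have "(\<lambda>i\<in>{..<n}. if i < 0 then g i else 0) = \<one>\<^bsub>Gp n l\<^esub>"
      by (simp add: Gp_one)
    then show ?case using subgroup.one_closed[OF H] by simp
  next
    case (Suc j)
    show ?case
    proof (cases "j < n")
      case True
      have eq: "(\<lambda>i\<in>{..<n}. if i < Suc j then g i else 0)
          = (\<lambda>i\<in>{..<n}. if i < j then g i else 0) \<otimes>\<^bsub>Gp n l\<^esub> pe n j (g j)"
        unfolding Gp_mult pe_def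
        using Gp_carrierD[OF g] by (auto intro!: restrict_ext)
      show ?thesis unfolding eq by (rule subgroup.m_closed[OF H Suc.IH P[OF True]])
    next
      case False
      have "(\<lambda>i\<in>{..<n}. if i < Suc j then g i else 0) = (\<lambda>i\<in>{..<n}. if i < j then g i else 0)"
        using False by (auto intro!: restrict_ext)
      then show ?thesis using Suc by simp
    qed
  qed
  moreover have "(\<lambda>i\<in>{..<n}. if i < n then g i else 0) = g"
    using Gp_carrier_ext[OF g] by (auto simp: fun_eq_iff)
  ultimately show ?thesis by metis
qed

lemma iso_of_inverse:
  assumes "f \<in> hom G G" "\<And>x. x \<in> carrier G \<Longrightarrow> f' x \<in> carrier G"
    "\<And>x. x \<in> carrier G \<Longrightarrow> f (f' x) = x" "\<And>x. x \<in> carrier G \<Longrightarrow> f' (f x) = x"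
  shows "f \<in> iso G G"
  unfolding iso_iff
proof (intro conjI)
  show "f \<in> hom G G" by fact
  show "f ` carrier G = carrier G"
  proof
    show "f ` carrier G \<subseteq> carrier G" using assms(1) by (auto simp: hom_def)
    show "carrier G \<subseteq> f ` carrier G" using assms(2,3) by (metis image_eqI subsetI)
  qed
  show "inj_on f (carrier G)" using assms(4) by (metis inj_onI)
qed

lemma modmul:
  fixes a c z K M :: int
  assumes "M dvd c * K"
  shows "(a + c * (z mod K)) mod M = (a + c * z) mod M"
proof -
  have zk: "z mod K = z - K * (z div K)" by (simp add: minus_mult_div_eq_mod)
  have "(a + c * (z mod K)) - (a + c * z) = - ((c * K) * (z div K))"
    by (simp add: zk algebra_simps)
  also have "M dvd \<dots>" using assms by simp
  finally show ?thesis by (simp add: mod_eq_dvd_iff)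
qed

definition tr :: "nat \<Rightarrow> (nat \<Rightarrow> nat) \<Rightarrow> nat \<Rightarrow> nat \<Rightarrow> int \<Rightarrow> (nat \<Rightarrow> int) \<Rightarrow> (nat \<Rightarrow> int)" where
  "tr n l m k c g = (\<lambda>i\<in>{..<n}. if i = k then (g k + c * g m) mod 2 ^ l k else g i)"

lemma tr_carrier: "g \<in> carrier (Gp n l) \<Longrightarrow> tr n l m k c g \<in> carrier (Gp n l)"
  unfolding tr_def by (rule Gp_carrierI) (auto dest: Gp_carrierD)

lemma tr_inverse:
  assumes "g \<in> carrier (Gp n l)" "m \<noteq> k" "m < n"
  shows "tr n l m k (-c) (tr n l m k c g) = g"
proof -
  have "tr n l m k (-c) (tr n l m k c g) i = g i" for i
  proof (cases "i < n")
    case True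
    then show ?thesis using assms Gp_carrierD[OF assms(1), of k] Gp_carrierD[OF assms(1), of i]
      by (auto simp: tr_def mod_add_left_eq mod_diff_left_eq)
  next
    case False
    then show ?thesis using Gp_carrier_ext[OF assms(1)] by (simp add: tr_def)
  qed
  then show ?thesis by auto
qed

lemma tr_iso:
  assumes "m \<noteq> k" "m < n" "k < n" "(2::int) ^ l k dvd c * 2 ^ l m"
  shows "tr n l m k c \<in> iso (Gp n l) (Gp n l)"
proof (rule iso_of_inverse)
  show "tr n l m k c \<in> hom (Gp n l) (Gp n l)"
  proof (rule homI)
    fix x assume "x \<in> carrier (Gp n l)"
    then show "tr n l m k c x \<in> carrier (Gp n l)" by (rule tr_carrier)
  next
    fix x y assume x: "x \<in> carrier (Gp n l)" and y: "y \<in> carrier (Gp n l)"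
    have "tr n l m k c (x \<otimes>\<^bsub>Gp n l\<^esub> y) i = (tr n l m k c x \<otimes>\<^bsub>Gp n l\<^esub> tr n l m k c y) i" for i
    proof (cases "i < n \<and> i = k")
      case True
      have L: "tr n l m k c (x \<otimes>\<^bsub>Gp n l\<^esub> y) i = ((x k + y k) mod 2 ^ l k + c * ((x m + y m) mod 2 ^ l m)) mod 2 ^ l k"
        using True assms by (simp add: tr_def Gp_mult)
      have R: "(tr n l m k c x \<otimes>\<^bsub>Gp n l\<^esub> tr n l m k c y) i = ((x k + c * x m) mod 2 ^ l k + (y k + c * y m) mod 2 ^ l k) mod 2 ^ l k"
        using True assms by (simp add: tr_def Gp_mult)
      have "((x k + y k) mod 2 ^ l k + c * ((x m + y m) mod 2 ^ l m)) mod 2 ^ l k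
          = (x k + y k + c * ((x m + y m) mod 2 ^ l m)) mod 2 ^ l k"
        by (simp add: mod_add_left_eq)
      also have "\<dots> = (x k + y k + c * (x m + y m)) mod 2 ^ l k"
        by (rule modmul) (use assms in simp)
      also have "\<dots> = ((x k + c * x m) + (y k + c * y m)) mod 2 ^ l k"
        by (simp add: algebra_simps)
      also have "\<dots> = ((x k + c * x m) mod 2 ^ l k + (y k + c * y m) mod 2 ^ l k) mod 2 ^ l k"
        by (simp add: mod_add_eq)
      finally show ?thesis using L R by simp
    next
      case False
      then show ?thesis using assms
        by (auto simp: tr_def Gp_mult)
    qed
    then show "tr n l m k c (x \<otimes>\<^bsub>Gp n l\<^esub> y) = tr n l m k c x \<otimes>\<^bsub>Gp n l\<^esub> tr n l m k c y"
      by auto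
  qed
next
  fix x assume x: "x \<in> carrier (Gp n l)"
  show "tr n l m k (-c) x \<in> carrier (Gp n l)" using x by (rule tr_carrier)
  show "tr n l m k c (tr n l m k (-c) x) = x"
    using tr_inverse[OF x assms(1,2), of "-c"] by simp
  show "tr n l m k (-c) (tr n l m k c x) = x"
    using tr_inverse[OF x assms(1,2)] by simp
qed

lemma tr_diff:
  assumes "h \<in> carrier (Gp n l)" "m \<noteq> k" "k < n"
  shows "tr n l m k c h \<otimes>\<^bsub>Gp n l\<^esub> inv\<^bsub>Gp n l\<^esub> h = pe n k ((c * h m) mod 2 ^ l k)"
  using assms
  by (auto simp: tr_def Gp_mult Gp_inv pe_def mod_add_left_eq mod_add_right_eq mod_diff_left_eq intro!: restrict_ext)

definition sw :: "nat \<Rightarrow> nat \<Rightarrow> nat \<Rightarrow> (nat \<Rightarrow> int) \<Rightarrow> (nat \<Rightarrow> int)" where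
  "sw n k t g = (\<lambda>i\<in>{..<n}. if i = k then g t else if i = t then g k else g i)"

lemma sw_carrier: "g \<in> carrier (Gp n l) \<Longrightarrow> k < n \<Longrightarrow> t < n \<Longrightarrow> l k = l t \<Longrightarrow> sw n k t g \<in> carrier (Gp n l)"
  unfolding sw_def
proof (rule Gp_carrierI)
  fix i assume "g \<in> carrier (Gp n l)" "k < n" "t < n" "l k = l t" "i < n"
  then show "0 \<le> (if i = k then g t else if i = t then g k else g i) \<and>
     (if i = k then g t else if i = t then g k else g i) < 2 ^ l i"
    using Gp_carrierD[of g n l k] Gp_carrierD[of g n l t] Gp_carrierD[of g n l i]
    by (cases "i = k"; cases "i = t") auto
qed

lemma sw_inverse:
  assumes "g \<in> carrier (Gp n l)" "k < n" "t < n"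
  shows "sw n k t (sw n k t g) = g"
proof -
  have "sw n k t (sw n k t g) i = g i" for i
  proof (cases "i < n")
    case True
    show ?thesis
    proof (cases "i = k")
      case True
      then show ?thesis using assms \<open>i < n\<close> by (simp add: sw_def)
    next
      case False
      then show ?thesis using assms \<open>i < n\<close> by (cases "i = t") (simp_all add: sw_def)
    qed
  next
    case False
    then show ?thesis using Gp_carrier_ext[OF assms(1), of i] by (simp add: sw_def)
  qed
  then show ?thesis by auto
qed

lemma sw_iso:
  assumes "k < n" "t < n" "l k = l t"
  shows "sw n k t \<in> iso (Gp n l) (Gp n l)"
proof (rule iso_of_inverse)
  show "sw n k t \<in> hom (Gp n l) (Gp n l)"
  proof (rule homI)
    fix x assume "x \<in> carrier (Gp n l)"
    then show "sw n k t x \<in> carrier (Gp n l)" using assms by (rule sw_carrier)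
  next
    fix x y assume x: "x \<in> carrier (Gp n l)" and y: "y \<in> carrier (Gp n l)"
    have "sw n k t (x \<otimes>\<^bsub>Gp n l\<^esub> y) i = (sw n k t x \<otimes>\<^bsub>Gp n l\<^esub> sw n k t y) i" for i
    proof (cases "i < n")
      case True
      show ?thesis
      proof (cases "i = k")
        case ik: True
        have "sw n k t (x \<otimes>\<^bsub>Gp n l\<^esub> y) i = (x t + y t) mod 2 ^ l t"
          using ik True assms(2) by (simp add: sw_def Gp_mult)
        moreover have "(sw n k t x \<otimes>\<^bsub>Gp n l\<^esub> sw n k t y) i = (x t + y t) mod 2 ^ l k"
          using ik True by (simp add: sw_def Gp_mult)
        ultimately show ?thesis using assms(3) by simp
      next
        case nk: False
        show ?thesis
        proof (cases "i = t")
          case it: True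
          have "sw n k t (x \<otimes>\<^bsub>Gp n l\<^esub> y) i = (x k + y k) mod 2 ^ l k"
            using it nk True assms(1) by (simp add: sw_def Gp_mult)
          moreover have "(sw n k t x \<otimes>\<^bsub>Gp n l\<^esub> sw n k t y) i = (x k + y k) mod 2 ^ l t"
            using it nk True by (simp add: sw_def Gp_mult)
          ultimately show ?thesis using assms(3) by simp
        next
          case nt: False
          then show ?thesis using nk True by (simp add: sw_def Gp_mult)
        qed
      qed
    next
      case False
      then show ?thesis by (simp add: sw_def Gp_mult)
    qed
    then show "sw n k t (x \<otimes>\<^bsub>Gp n l\<^esub> y) = sw n k t x \<otimes>\<^bsub>Gp n l\<^esub> sw n k t y"
      by (rule ext)
  qed
next
  fix x assume x: "x \<in> carrier (Gp n l)"
  show "sw n k t x \<in> carrier (Gp n l)" using x assms by (rule sw_carrier)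
  show "sw n k t (sw n k t x) = x" using sw_inverse[OF x assms(1,2)] .
  show "sw n k t (sw n k t x) = x" using sw_inverse[OF x assms(1,2)] .
qed

lemma char_img: "characteristic H G \<Longrightarrow> \<phi> \<in> iso G G \<Longrightarrow> h \<in> H \<Longrightarrow> \<phi> h \<in> H"
proof -
  assume c: "characteristic H G" and p: "\<phi> \<in> iso G G" and h: "h \<in> H"
  have "\<phi> ` H = H" using c p unfolding characteristic_def by simp
  moreover have "\<phi> h \<in> \<phi> ` H" using h by (rule imageI)
  ultimately show ?thesis by simp
qed

lemma odd_decomp: "(y::int) > 0 \<Longrightarrow> \<exists>t u. y = 2 ^ t * u \<and> odd u"
proof (induction "nat y" arbitrary: y rule: less_induct)
  case less
  show ?case
  proof (cases "odd y")
    case True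
    then show ?thesis by (intro exI[of _ 0] exI[of _ y]) simp
  next
    case False
    then have y2: "y = 2 * (y div 2)" by simp
    have "y div 2 > 0" using less.prems False by auto
    moreover have "nat (y div 2) < nat y" using less.prems by auto
    ultimately obtain t u where "y div 2 = 2 ^ t * u" "odd u" using less.hyps by blast
    then show ?thesis using y2 by (intro exI[of _ "Suc t"] exI[of _ u]) simp
  qed
qed

lemma odd_inverse: "odd (u::int) \<Longrightarrow> \<exists>a b. a * u + b * 2 ^ L = 1"
proof -
  assume "odd u"
  then have "coprime u 2" by (simp add: coprime_commute)
  then have "coprime u ((2::int) ^ L)" by simp
  then have "gcd u ((2::int) ^ L) = 1" by simp
  then show ?thesis using bezout_int[of u "2 ^ L"] by metis
qed

lemma cyc:
  fixes L :: nat and P :: "int set"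
  assumes P0: "0 \<in> P" and Pc: "\<And>x c. x \<in> P \<Longrightarrow> (c * x) mod 2 ^ L \<in> P"
    and Ps: "P \<subseteq> {0..<2 ^ L}"
  shows "\<exists>s\<le>L. \<forall>y\<in>{0..<2 ^ L}. y \<in> P \<longleftrightarrow> 2 ^ s dvd y"
proof -
  define s where "s = (LEAST t. (2::int) ^ t mod 2 ^ L \<in> P)"
  have ex: "(2::int) ^ L mod 2 ^ L \<in> P" using P0 by simp
  have sP: "(2::int) ^ s mod 2 ^ L \<in> P" unfolding s_def
    by (rule LeastI[of "\<lambda>t. (2::int) ^ t mod 2 ^ L \<in> P" L]) (rule ex)
  have sL: "s \<le> L" unfolding s_def
    by (rule Least_le[of "\<lambda>t. (2::int) ^ t mod 2 ^ L \<in> P" L]) (rule ex)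
  have "y \<in> P \<longleftrightarrow> 2 ^ s dvd y" if y: "y \<in> {0..<2 ^ L}" for y
  proof
    assume yP: "y \<in> P"
    show "2 ^ s dvd y"
    proof (cases "y = 0")
      case False
      then have "y > 0" using y by auto
      then obtain t u where tu: "y = 2 ^ t * u" "odd u" using odd_decomp by blast
      obtain a b where ab: "a * u + b * 2 ^ L = 1" using odd_inverse[OF tu(2)] by blast
      have "(a * y) mod 2 ^ L \<in> P" using Pc[OF yP] .
      moreover have eqay: "a * y = 2 ^ t + (- b * 2 ^ t) * 2 ^ L"
      proof -
        have "a * y = 2 ^ t * (a * u)" using tu by (simp add: algebra_simps)
        also have "\<dots> = 2 ^ t * (1 - b * 2 ^ L)"
        proof -
          have "a * u = 1 - b * 2 ^ L" using ab by linarith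
          then show ?thesis by simp
        qed
        finally show ?thesis by (simp add: algebra_simps)
      qed
      moreover have "(a * y) mod 2 ^ L = (2 ^ t) mod (2::int) ^ L"
        unfolding eqay by (rule mod_mult_self1)
      ultimately have "(2 ^ t) mod 2 ^ L \<in> P" by simp
      then have "s \<le> t" unfolding s_def by (rule Least_le[of "\<lambda>t. (2::int) ^ t mod 2 ^ L \<in> P" t])
      then have "(2::int) ^ s dvd 2 ^ t" by (rule le_imp_power_dvd)
      then show ?thesis using tu by simp
    qed simp
  next
    assume "2 ^ s dvd y"
    then obtain w where w: "y = 2 ^ s * w" by blast
    have "(w * (2 ^ s mod 2 ^ L)) mod 2 ^ L \<in> P" using Pc[OF sP] .
    moreover have "(w * (2 ^ s mod 2 ^ L)) mod 2 ^ L = y"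
    proof -
      have "(w * (2 ^ s mod 2 ^ L)) mod 2 ^ L = (w * 2 ^ s) mod (2::int) ^ L"
        by (simp add: mod_mult_right_eq)
      also have "\<dots> = y mod 2 ^ L" using w by (simp add: mult.commute)
      also have "\<dots> = y" using y by simp
      finally show ?thesis .
    qed
    ultimately show "y \<in> P" by simp
  qed
  then show ?thesis using sL by blast
qed


lemma subgroup_pow_closed:
  assumes "subgroup H G" "x \<in> H" shows "x [^]\<^bsub>G\<^esub> (m::nat) \<in> H"
proof (induction m)
  case 0
  then show ?case using subgroup.one_closed[OF assms(1)] by simp
next
  case (Suc m)
  then show ?case using subgroup.m_closed[OF assms(1) Suc assms(2)] by simp
qed

lemma pe_pow:
  assumes "k < n" "0 \<le> x" "x < 2 ^ l k"
  shows "pe n k x [^]\<^bsub>Gp n l\<^esub> (m::nat) = pe n k ((int m * x) mod 2 ^ l k)"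
  using assms pe_carrier[of x l k n] by (subst Gp_pow) (auto simp: pe_def intro!: restrict_ext)

lemma Pstruct:
  assumes H: "subgroup H (Gp n l)"
  shows "\<exists>s. \<forall>k<n. s k \<le> l k \<and> (\<forall>y\<in>{0..<2 ^ l k}. pe n k y \<in> H \<longleftrightarrow> 2 ^ s k dvd y)"
proof -
  have "\<exists>s\<le>l k. \<forall>y\<in>{0..<2 ^ l k}. y \<in> {y. pe n k y \<in> H} \<inter> {0..<2 ^ l k} \<longleftrightarrow> 2 ^ s dvd y"
    if k: "k < n" for k
  proof (rule cyc)
    show "0 \<in> {y. pe n k y \<in> H} \<inter> {0..<2 ^ l k}"
      using subgroup.one_closed[OF H] by (simp add: pe_zero[of n k l])
    show "{y. pe n k y \<in> H} \<inter> {0..<2 ^ l k} \<subseteq> {0..<2 ^ l k}" by auto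
    fix x c assume x: "x \<in> {y. pe n k y \<in> H} \<inter> {0..<2 ^ l k}"
    define m where "m = nat (c mod 2 ^ l k)"
    have "pe n k x [^]\<^bsub>Gp n l\<^esub> m \<in> H" using subgroup_pow_closed[OF H] x by auto
    moreover have "pe n k x [^]\<^bsub>Gp n l\<^esub> m = pe n k ((c * x) mod 2 ^ l k)"
    proof -
      have "int m = c mod 2 ^ l k" unfolding m_def by simp
      then have "(int m * x) mod 2 ^ l k = (c * x) mod 2 ^ l k"
        by (simp add: mod_mult_left_eq)
      then show ?thesis using pe_pow[OF k, of x l m] x by simp
    qed
    ultimately show "(c * x) mod 2 ^ l k \<in> {y. pe n k y \<in> H} \<inter> {0..<2 ^ l k}" by simp
  qed
  then have "\<forall>k. \<exists>s. k < n \<longrightarrow> s \<le> l k \<and> (\<forall>y\<in>{0..<2 ^ l k}. pe n k y \<in> H \<longleftrightarrow> 2 ^ s dvd y)"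
    by auto
  from choice[OF this] show ?thesis .
qed

lemma pow_dvd_cancel: "(2::int) ^ (d + s) dvd 2 ^ d * x \<Longrightarrow> 2 ^ s dvd x"
  by (simp add: power_add)

lemma key:
  assumes H: "characteristic H (Gp n l)"
    and sorted: "\<And>i j. i \<le> j \<Longrightarrow> j < n \<Longrightarrow> l i \<le> l j"
    and nocond: "\<not> (\<exists>i j. i < j \<and> j < n \<and> l i + 2 \<le> l j
            \<and> card {k. k < n \<and> l k = l i} = 1 \<and> card {k. k < n \<and> l k = l j} = 1)"
    and h: "h \<in> H" and k: "k < n"
  shows "pe n k (h k) \<in> H"
proof (rule ccontr)
  assume nk: "pe n k (h k) \<notin> H"
  have sg: "subgroup H (Gp n l)" using H unfolding characteristic_def by blast
  have hc: "h \<in> carrier (Gp n l)" using h subgroup.subset[OF sg] by blast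
  note hr = Gp_carrierD[OF hc]
  obtain s where s0: "\<forall>k<n. s k \<le> l k \<and> (\<forall>y\<in>{0..<2 ^ l k}. pe n k y \<in> H \<longleftrightarrow> 2 ^ s k dvd y)"
    using Pstruct[OF sg] by blast
  have s: "\<And>k. k < n \<Longrightarrow> s k \<le> l k"
    "\<And>k y. k < n \<Longrightarrow> 0 \<le> y \<Longrightarrow> y < 2 ^ l k \<Longrightarrow> pe n k y \<in> H \<longleftrightarrow> 2 ^ s k dvd y"
    using s0 by auto
  define B where "B = {m. m < n \<and> pe n m (h m) \<notin> H}"
  have diffH: "\<phi> h0 \<otimes>\<^bsub>Gp n l\<^esub> inv\<^bsub>Gp n l\<^esub> h0 \<in> H" if "\<phi> \<in> iso (Gp n l) (Gp n l)" "h0 \<in> H" for \<phi> h0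
    by (rule subgroup.m_closed[OF sg char_img[OF H that(1,2)] subgroup.m_inv_closed[OF sg that(2)]])
  have twin: "False" if m: "m \<in> B" and t: "t < n" "t \<noteq> m" "l t = l m" for m t
  proof -
    have mn: "m < n" using m B_def by auto
    define h' where "h' = sw n m t h"
    have h'H: "h' \<in> H" unfolding h'_def by (rule char_img[OF H sw_iso[OF mn t(1) t(3)[symmetric]] h])
    have h'c: "h' \<in> carrier (Gp n l)" using h'H subgroup.subset[OF sg] by blast
    have dv: "(2::int) ^ l m dvd 1 * 2 ^ l t" using t(3) by simp
    have "tr n l t m 1 h' \<otimes>\<^bsub>Gp n l\<^esub> inv\<^bsub>Gp n l\<^esub> h' \<in> H"
      by (rule diffH[OF tr_iso[OF t(2) t(1) mn dv] h'H])
    moreover have "tr n l t m 1 h' \<otimes>\<^bsub>Gp n l\<^esub> inv\<^bsub>Gp n l\<^esub> h' = pe n m (h m)"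
      using tr_diff[OF h'c t(2) mn, of 1] hr[OF mn] mn t by (simp add: h'_def sw_def)
    ultimately show False using m B_def by auto
  qed
  have inB: "m \<in> B \<longleftrightarrow> m < n \<and> \<not> 2 ^ s m dvd h m" for m
    unfolding B_def using s(2) hr by auto
  have spread: "l m + 2 \<le> l m'" if m: "m \<in> B" and m': "m' \<in> B" and mm: "m < m'" for m m'
  proof -
    have mn: "m < n" and mn': "m' < n" and nm: "\<not> 2 ^ s m dvd h m" and nm': "\<not> 2 ^ s m' dvd h m'"
      using m m' inB by auto
    have le: "l m \<le> l m'" using sorted mm mn' by simp
    define d where "d = l m' - l m"
    have dl: "l m' = d + l m" using le d_def by simp
    have A: "pe n m' (((2::int) ^ d * h m) mod 2 ^ l m') \<in> H"
    proof -
      have "(2::int) ^ l m' dvd 2 ^ d * 2 ^ l m" using dl by (simp add: power_add)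
      from diffH[OF tr_iso[OF mm[THEN less_imp_neq] mn mn' this] h]
      show ?thesis using tr_diff[OF hc mm[THEN less_imp_neq] mn', of "2 ^ d"] by simp
    qed
    have "(2::int) ^ d * h m < 2 ^ d * 2 ^ l m" using hr[OF mn] by simp
    then have "(2::int) ^ d * h m < 2 ^ l m'" using dl by (simp add: power_add)
    then have A': "2 ^ s m' dvd (2::int) ^ d * h m"
      using A s(2)[OF mn', of "2 ^ d * h m"] hr[OF mn] by simp
    have C: "pe n m ((1 * h m') mod 2 ^ l m) \<in> H"
    proof -
      have "(2::int) ^ l m dvd 1 * 2 ^ l m'" using le by (simp add: le_imp_power_dvd)
      from diffH[OF tr_iso[OF mm[THEN less_imp_neq, THEN not_sym] mn' mn this] h]
      show ?thesis using tr_diff[OF hc mm[THEN less_imp_neq, THEN not_sym] mn, of 1] by simp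
    qed
    then have "2 ^ s m dvd (h m' mod 2 ^ l m)"
      using s(2)[OF mn, of "h m' mod 2 ^ l m"] by simp
    moreover have "(2::int) ^ s m dvd 2 ^ l m" using s(1)[OF mn] by (simp add: le_imp_power_dvd)
    ultimately have C': "2 ^ s m dvd h m'" by (simp add: dvd_mod_iff)
    have lt1: "s m < s m'"
    proof (rule ccontr)
      assume "\<not> s m < s m'"
      then have "(2::int) ^ s m' dvd 2 ^ s m" by (simp add: le_imp_power_dvd)
      then show False using C' nm' dvd_trans by blast
    qed
    have lt2: "s m' < d + s m"
    proof (rule ccontr)
      assume "\<not> s m' < d + s m"
      then have "(2::int) ^ (d + s m) dvd 2 ^ s m'" by (simp add: le_imp_power_dvd)
      then have "(2::int) ^ (d + s m) dvd 2 ^ d * h m" using A' dvd_trans by blast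
      then show False using nm pow_dvd_cancel by blast
    qed
    show ?thesis using lt1 lt2 dl by simp
  qed
  have card1: "card {j. j < n \<and> l j = l m} = 1" if m: "m \<in> B" for m
  proof -
    have "{j. j < n \<and> l j = l m} = {m}" using twin[OF m] m unfolding B_def by auto
    then show ?thesis by simp
  qed
  have kB: "k \<in> B" using k nk B_def by auto
  have Bk: "B = {k}"
  proof (rule ccontr)
    assume "B \<noteq> {k}"
    then obtain m where m: "m \<in> B" "m \<noteq> k" using kB by blast
    have mn: "m < n" using m B_def by auto
    show False
    proof (cases "m < k")
      case True
      have "\<exists>i j. i < j \<and> j < n \<and> l i + 2 \<le> l j
            \<and> card {k. k < n \<and> l k = l i} = 1 \<and> card {k. k < n \<and> l k = l j} = 1"
        using spread[OF m(1) kB True] card1[OF m(1)] card1[OF kB] k True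
        by (intro exI[of _ m] exI[of _ k]) simp
      then show ?thesis using nocond by blast
    next
      case False
      then have "k < m" using m(2) by simp
      have "\<exists>i j. i < j \<and> j < n \<and> l i + 2 \<le> l j
            \<and> card {k. k < n \<and> l k = l i} = 1 \<and> card {k. k < n \<and> l k = l j} = 1"
        using spread[OF kB m(1) \<open>k < m\<close>] card1[OF m(1)] card1[OF kB] mn \<open>k < m\<close>
        by (intro exI[of _ k] exI[of _ m]) simp
      then show ?thesis using nocond by blast
    qed
  qed
  define g where "g = (\<lambda>i\<in>{..<n}. if i = k then 0 else h i)"
  have gc: "g \<in> carrier (Gp n l)" unfolding g_def by (rule Gp_carrierI) (use hr in auto)
  have gH: "g \<in> H"
  proof (rule box[OF sg gc])
    fix i assume i: "i < n"
    show "pe n i (g i) \<in> H"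
    proof (cases "i = k")
      case True
      then show ?thesis using subgroup.one_closed[OF sg] i by (simp add: g_def pe_zero[of n k l])
    next
      case False
      then have "i \<notin> B" using Bk by auto
      then show ?thesis using i False by (simp add: B_def g_def)
    qed
  qed
  have "h \<otimes>\<^bsub>Gp n l\<^esub> inv\<^bsub>Gp n l\<^esub> g \<in> H"
    by (rule subgroup.m_closed[OF sg h subgroup.m_inv_closed[OF sg gH]])
  moreover have "h \<otimes>\<^bsub>Gp n l\<^esub> inv\<^bsub>Gp n l\<^esub> g = pe n k (h k)"
    unfolding Gp_inv[OF gc]
    using hr k by (auto simp: Gp_mult g_def pe_def mod_add_right_eq intro!: restrict_ext)
  ultimately show False using nk by simp
qed


lemma ord_dvd_iff:
  assumes "0 \<le> x" "x < 2 ^ L" "b \<le> L"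
  shows "group.ord (integer_mod_group (2 ^ L)) x dvd 2 ^ b \<longleftrightarrow> (2::int) ^ (L - b) dvd x"
proof -
  have xc: "x \<in> carrier (integer_mod_group (2 ^ L))"
    using assms by (simp add: carrier_integer_mod_group)
  have "group.ord (integer_mod_group (2 ^ L)) x dvd 2 ^ b \<longleftrightarrow>
      x [^]\<^bsub>integer_mod_group (2 ^ L)\<^esub> ((2::nat) ^ b) = \<one>\<^bsub>integer_mod_group (2 ^ L)\<^esub>"
    by (rule group.pow_eq_id[OF group_integer_mod_group xc, symmetric])
  also have "\<dots> \<longleftrightarrow> (2 ^ b * x) mod 2 ^ L = 0" by simp
  also have "\<dots> \<longleftrightarrow> (2::int) ^ L dvd 2 ^ b * x" by (simp add: dvd_eq_mod_eq_0)
  also have "\<dots> \<longleftrightarrow> (2::int) ^ (L - b) dvd x"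
  proof -
    have "(2::int) ^ L = 2 ^ b * 2 ^ (L - b)" using assms(3) by (simp flip: power_add)
    then show ?thesis by simp
  qed
  finally show ?thesis .
qed

lemma ord_pow2:
  assumes "0 \<le> x" "x < 2 ^ L"
  shows "\<exists>c. group.ord (integer_mod_group (2 ^ L)) x = 2 ^ c"
proof -
  have "group.ord (integer_mod_group (2 ^ L)) x dvd 2 ^ L"
    using ord_dvd_iff[OF assms, of L] by simp
  then show ?thesis using divides_primepow_nat[OF two_is_prime_nat] by blast
qed

lemma Rset_char:
  assumes a: "\<And>i. i < n \<Longrightarrow> a i \<le> l i"
  shows "Rset n l a = {g \<in> carrier (Gp n l). \<forall>k<n. (2::int) ^ (l k - a k) dvd g k}"
proof (rule equalityI[OF subsetI subsetI])
  fix g assume "g \<in> Rset n l a"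
  then obtain b where b: "\<forall>i<n. b i \<le> a i" "g \<in> Tset n l b" by (auto simp: Rset_def)
  then have gc: "g \<in> carrier (Gp n l)"
    and ord: "\<And>i. i < n \<Longrightarrow> group.ord (integer_mod_group (2 ^ l i)) (g i) = 2 ^ b i"
    by (auto simp: Tset_def)
  have "(2::int) ^ (l k - a k) dvd g k" if k: "k < n" for k
  proof -
    have "group.ord (integer_mod_group (2 ^ l k)) (g k) dvd 2 ^ a k"
      using ord[OF k] b(1) k by (simp add: le_imp_power_dvd)
    then show ?thesis using ord_dvd_iff[of "g k" "l k" "a k"] Gp_carrierD[OF gc k] a[OF k] by simp
  qed
  then show "g \<in> {g \<in> carrier (Gp n l). \<forall>k<n. (2::int) ^ (l k - a k) dvd g k}" using gc by simp
next
  fix g assume g: "g \<in> {g \<in> carrier (Gp n l). \<forall>k<n. (2::int) ^ (l k - a k) dvd g k}"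
  then have gc: "g \<in> carrier (Gp n l)" and gd: "\<And>k. k < n \<Longrightarrow> (2::int) ^ (l k - a k) dvd g k" by auto
  define b where "b i = (SOME c. group.ord (integer_mod_group (2 ^ l i)) (g i) = 2 ^ c)" for i
  have ob: "group.ord (integer_mod_group (2 ^ l k)) (g k) = 2 ^ b k" if k: "k < n" for k
    unfolding b_def by (rule someI_ex) (use ord_pow2 Gp_carrierD[OF gc k] in blast)
  have ba: "b k \<le> a k" if k: "k < n" for k
  proof -
    have "group.ord (integer_mod_group (2 ^ l k)) (g k) dvd 2 ^ a k"
      using ord_dvd_iff[of "g k" "l k" "a k"] Gp_carrierD[OF gc k] a[OF k] gd[OF k] by simp
    then have "(2::nat) ^ b k dvd 2 ^ a k" using ob[OF k] by simp
    then show ?thesis by (simp add: dvd_power_iff_le)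
  qed
  have "g \<in> Tset n l b" using gc ob by (simp add: Tset_def)
  then show "g \<in> Rset n l a" using ba unfolding Rset_def by blast
qed

lemma char_regular:
  assumes H: "characteristic H (Gp n l)"
    and sorted: "\<And>i j. i \<le> j \<Longrightarrow> j < n \<Longrightarrow> l i \<le> l j"
    and nocond: "\<not> (\<exists>i j. i < j \<and> j < n \<and> l i + 2 \<le> l j
            \<and> card {k. k < n \<and> l k = l i} = 1 \<and> card {k. k < n \<and> l k = l j} = 1)"
  shows "regular n l H"
proof -
  have sg: "subgroup H (Gp n l)" using H unfolding characteristic_def by blast
  obtain s where s0: "\<forall>k<n. s k \<le> l k \<and> (\<forall>y\<in>{0..<2 ^ l k}. pe n k y \<in> H \<longleftrightarrow> 2 ^ s k dvd y)"
    using Pstruct[OF sg] by blast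
  have s: "\<And>k. k < n \<Longrightarrow> s k \<le> l k"
    "\<And>k y. k < n \<Longrightarrow> 0 \<le> y \<Longrightarrow> y < 2 ^ l k \<Longrightarrow> pe n k y \<in> H \<longleftrightarrow> 2 ^ s k dvd y"
    using s0 by auto
  define a where "a k = l k - s k" for k
  have al: "a k \<le> l k" for k unfolding a_def by simp
  have las: "l k - a k = s k" if "k < n" for k unfolding a_def using s(1)[OF that] by simp
  have "H = Rset n l a"
  proof -
    have "H = {g \<in> carrier (Gp n l). \<forall>k<n. (2::int) ^ (l k - a k) dvd g k}"
    proof (rule equalityI[OF subsetI subsetI])
      fix h assume h: "h \<in> H"
      have hc: "h \<in> carrier (Gp n l)" using h subgroup.subset[OF sg] by blast
      have "(2::int) ^ (l k - a k) dvd h k" if k: "k < n" for k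
        using key[OF H sorted nocond h k] s(2)[OF k] Gp_carrierD[OF hc k] las[OF k] by simp
      then show "h \<in> {g \<in> carrier (Gp n l). \<forall>k<n. (2::int) ^ (l k - a k) dvd g k}" using hc by simp
    next
      fix g assume g: "g \<in> {g \<in> carrier (Gp n l). \<forall>k<n. (2::int) ^ (l k - a k) dvd g k}"
      then have gc: "g \<in> carrier (Gp n l)" by simp
      show "g \<in> H"
      proof (rule box[OF sg gc])
        fix k assume k: "k < n"
        have "(2::int) ^ (l k - a k) dvd g k" using g k by blast
        then show "pe n k (g k) \<in> H" using s(2)[OF k] Gp_carrierD[OF gc k] las[OF k] by simp
      qed
    qed
    also have "\<dots> = Rset n l a" by (rule Rset_char[symmetric]) (rule al)
    finally show ?thesis .
  qed
  then show ?thesis unfolding regular_def using al by blast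
qed


section \<open>Construction of an irregular characteristic subgroup\<close>

definition Dset :: "nat \<Rightarrow> (nat \<Rightarrow> nat) \<Rightarrow> nat \<Rightarrow> (nat \<Rightarrow> int) set" where
  "Dset n l s = {y. \<exists>x\<in>carrier (Gp n l). y = x [^]\<^bsub>Gp n l\<^esub> ((2::nat) ^ s)}"

lemma Gp_monoid: "monoid (Gp n l)"
  using Gp_group group.is_monoid by blast

lemma Gp_pow_closed: "x \<in> carrier (Gp n l) \<Longrightarrow> x [^]\<^bsub>Gp n l\<^esub> (m::nat) \<in> carrier (Gp n l)"
  using monoid.nat_pow_closed[OF Gp_monoid] by blast

lemma Dset_char:
  "y \<in> Dset n l s \<longleftrightarrow> y \<in> carrier (Gp n l) \<and> (\<forall>k<n. (2::int) ^ (min s (l k)) dvd y k)"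
proof
  assume "y \<in> Dset n l s"
  then obtain x where x: "x \<in> carrier (Gp n l)" "y = x [^]\<^bsub>Gp n l\<^esub> ((2::nat) ^ s)"
    by (auto simp: Dset_def)
  have yc: "y \<in> carrier (Gp n l)" using x Gp_pow_closed by simp
  have "(2::int) ^ (min s (l k)) dvd y k" if k: "k < n" for k
  proof -
    have yk: "y k = (2 ^ s * x k) mod 2 ^ l k" using x k by (simp add: Gp_pow)
    have "(2::int) ^ (min s (l k)) dvd 2 ^ s * x k"
      by (rule dvd_mult2) (rule le_imp_power_dvd, simp)
    moreover have "(2::int) ^ (min s (l k)) dvd 2 ^ l k" by (rule le_imp_power_dvd) simp
    ultimately show ?thesis unfolding yk by (rule dvd_mod)
  qed
  then show "y \<in> carrier (Gp n l) \<and> (\<forall>k<n. (2::int) ^ (min s (l k)) dvd y k)" using yc by simp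
next
  assume y: "y \<in> carrier (Gp n l) \<and> (\<forall>k<n. (2::int) ^ (min s (l k)) dvd y k)"
  then have yc: "y \<in> carrier (Gp n l)" and yd: "\<And>k. k < n \<Longrightarrow> (2::int) ^ (min s (l k)) dvd y k"
    by auto
  note yr = Gp_carrierD[OF yc]
  define x where "x = (\<lambda>k\<in>{..<n}. if s \<le> l k then y k div 2 ^ s else 0)"
  have xc: "x \<in> carrier (Gp n l)"
    unfolding x_def
  proof (rule Gp_carrierI)
    fix k assume k: "k < n"
    have "y k div 2 ^ s \<le> y k div 1" using yr[OF k] by (intro zdiv_mono2) auto
    then have "y k div 2 ^ s \<le> y k" by simp
    then show "0 \<le> (if s \<le> l k then y k div 2 ^ s else 0) \<and> (if s \<le> l k then y k div 2 ^ s else 0) < 2 ^ l k"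
      using yr[OF k] by (auto simp: pos_imp_zdiv_nonneg_iff)
  qed
  have "x [^]\<^bsub>Gp n l\<^esub> ((2::nat) ^ s) = y"
  proof -
    have "(x [^]\<^bsub>Gp n l\<^esub> ((2::nat) ^ s)) k = y k" for k
    proof (cases "k < n")
      case k: True
      show ?thesis
      proof (cases "s \<le> l k")
        case True
        then have "(2::int) ^ s dvd y k" using yd[OF k] by simp
        then have "2 ^ s * (y k div 2 ^ s) = y k" by simp
        then show ?thesis unfolding Gp_pow[OF xc] using True k yr[OF k] by (simp add: x_def)
      next
        case False
        then have "(2::int) ^ l k dvd y k" using yd[OF k] by simp
        then have "y k = 0" using yr[OF k]
          by (metis dvd_eq_mod_eq_0 mod_pos_pos_trivial order_le_less)
        then show ?thesis unfolding Gp_pow[OF xc] using False k by (simp add: x_def)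
      qed
    next
      case False
      then show ?thesis unfolding Gp_pow[OF xc] using Gp_carrier_ext[OF yc] by simp
    qed
    then show ?thesis by (rule ext)
  qed
  then show "y \<in> Dset n l s" unfolding Dset_def using xc by force
qed

lemma iso_facts:
  assumes "\<phi> \<in> iso (Gp n l) (Gp n l)"
  shows "\<phi> \<in> hom (Gp n l) (Gp n l)" "\<phi> ` carrier (Gp n l) = carrier (Gp n l)"
    "inj_on \<phi> (carrier (Gp n l))"
  using assms by (auto simp: iso_iff)

lemma iso_pow:
  assumes "\<phi> \<in> iso (Gp n l) (Gp n l)" "x \<in> carrier (Gp n l)"
  shows "\<phi> (x [^]\<^bsub>Gp n l\<^esub> (m::nat)) = \<phi> x [^]\<^bsub>Gp n l\<^esub> m"
  by (rule hom_nat_pow[OF iso_facts(1)[OF assms(1)] assms(2) Gp_group Gp_group])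

lemma iso_carrier:
  assumes "\<phi> \<in> iso (Gp n l) (Gp n l)" "x \<in> carrier (Gp n l)"
  shows "\<phi> x \<in> carrier (Gp n l)"
  using iso_facts(2)[OF assms(1)] assms(2) by blast

lemma iso_one_iff:
  assumes "\<phi> \<in> iso (Gp n l) (Gp n l)" "x \<in> carrier (Gp n l)"
  shows "\<phi> x = \<one>\<^bsub>Gp n l\<^esub> \<longleftrightarrow> x = \<one>\<^bsub>Gp n l\<^esub>"
proof -
  have o: "\<phi> \<one>\<^bsub>Gp n l\<^esub> = \<one>\<^bsub>Gp n l\<^esub>"
    by (rule hom_one[OF iso_facts(1)[OF assms(1)] Gp_group Gp_group])
  have "\<one>\<^bsub>Gp n l\<^esub> \<in> carrier (Gp n l)" by (rule monoid.one_closed[OF Gp_monoid])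
  then show ?thesis using o assms(2) inj_onD[OF iso_facts(3)[OF assms(1)]] by metis
qed

lemma Dset_iso:
  assumes p: "\<phi> \<in> iso (Gp n l) (Gp n l)" and g: "g \<in> carrier (Gp n l)"
  shows "\<phi> g \<in> Dset n l s \<longleftrightarrow> g \<in> Dset n l s"
proof
  assume "\<phi> g \<in> Dset n l s"
  then obtain y where y: "y \<in> carrier (Gp n l)" "\<phi> g = y [^]\<^bsub>Gp n l\<^esub> ((2::nat) ^ s)"
    by (auto simp: Dset_def)
  obtain x where x: "x \<in> carrier (Gp n l)" "y = \<phi> x" using y(1) iso_facts(2)[OF p] by blast
  have "\<phi> g = \<phi> (x [^]\<^bsub>Gp n l\<^esub> ((2::nat) ^ s))" using y(2) x iso_pow[OF p x(1)] by simp
  then have "g = x [^]\<^bsub>Gp n l\<^esub> ((2::nat) ^ s)"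
    using inj_onD[OF iso_facts(3)[OF p]] g Gp_pow_closed[OF x(1)] by blast
  then show "g \<in> Dset n l s" using x(1) by (auto simp: Dset_def)
next
  assume "g \<in> Dset n l s"
  then obtain x where x: "x \<in> carrier (Gp n l)" "g = x [^]\<^bsub>Gp n l\<^esub> ((2::nat) ^ s)"
    by (auto simp: Dset_def)
  have "\<phi> g = \<phi> x [^]\<^bsub>Gp n l\<^esub> ((2::nat) ^ s)" using x iso_pow[OF p x(1)] by simp
  then show "\<phi> g \<in> Dset n l s" using iso_carrier[OF p x(1)] by (auto simp: Dset_def)
qed

definition Hinv :: "nat \<Rightarrow> (nat \<Rightarrow> nat) \<Rightarrow> nat \<Rightarrow> nat \<Rightarrow> (nat \<Rightarrow> int) set" where
  "Hinv n l i j = {g \<in> carrier (Gp n l). g [^]\<^bsub>Gp n l\<^esub> (4::nat) = \<one>\<^bsub>Gp n l\<^esub>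
      \<and> g \<in> Dset n l (l i - 1) \<and> g [^]\<^bsub>Gp n l\<^esub> (2::nat) \<in> Dset n l (l j - 1)
      \<and> (g \<in> Dset n l (l i) \<longleftrightarrow> g [^]\<^bsub>Gp n l\<^esub> (2::nat) \<in> Dset n l (l j))}"

lemma Hinv_iso:
  assumes p: "\<phi> \<in> iso (Gp n l) (Gp n l)" and g: "g \<in> carrier (Gp n l)"
  shows "\<phi> g \<in> Hinv n l i j \<longleftrightarrow> g \<in> Hinv n l i j"
proof -
  have 4: "\<phi> g [^]\<^bsub>Gp n l\<^esub> (4::nat) = \<one>\<^bsub>Gp n l\<^esub> \<longleftrightarrow> g [^]\<^bsub>Gp n l\<^esub> (4::nat) = \<one>\<^bsub>Gp n l\<^esub>"
  proof -
    have e: "\<phi> (g [^]\<^bsub>Gp n l\<^esub> (4::nat)) = \<phi> g [^]\<^bsub>Gp n l\<^esub> (4::nat)" by (rule iso_pow[OF p g])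
    have "\<phi> (g [^]\<^bsub>Gp n l\<^esub> (4::nat)) = \<one>\<^bsub>Gp n l\<^esub> \<longleftrightarrow> g [^]\<^bsub>Gp n l\<^esub> (4::nat) = \<one>\<^bsub>Gp n l\<^esub>"
      by (rule iso_one_iff[OF p Gp_pow_closed[OF g]])
    from this[unfolded e] show ?thesis .
  qed
  have 2: "\<phi> g [^]\<^bsub>Gp n l\<^esub> (2::nat) \<in> Dset n l s \<longleftrightarrow> g [^]\<^bsub>Gp n l\<^esub> (2::nat) \<in> Dset n l s" for s
  proof -
    have e: "\<phi> (g [^]\<^bsub>Gp n l\<^esub> (2::nat)) = \<phi> g [^]\<^bsub>Gp n l\<^esub> (2::nat)" by (rule iso_pow[OF p g])
    have "\<phi> (g [^]\<^bsub>Gp n l\<^esub> (2::nat)) \<in> Dset n l s \<longleftrightarrow> g [^]\<^bsub>Gp n l\<^esub> (2::nat) \<in> Dset n l s"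
      by (rule Dset_iso[OF p Gp_pow_closed[OF g]])
    from this[unfolded e] show ?thesis .
  qed
  show ?thesis unfolding Hinv_def using 4 2 Dset_iso[OF p g] iso_carrier[OF p g] g by simp
qed

lemma Hinv_char:
  assumes "subgroup (Hinv n l i j) (Gp n l)"
  shows "characteristic (Hinv n l i j) (Gp n l)"
  unfolding characteristic_def
proof (intro conjI allI impI)
  show "subgroup (Hinv n l i j) (Gp n l)" by fact
  fix \<phi> assume p: "\<phi> \<in> iso (Gp n l) (Gp n l)"
  show "\<phi> ` Hinv n l i j = Hinv n l i j"
  proof
    show "\<phi> ` Hinv n l i j \<subseteq> Hinv n l i j"
    proof
      fix y assume "y \<in> \<phi> ` Hinv n l i j"
      then obtain g where g: "g \<in> Hinv n l i j" "y = \<phi> g" by blast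
      have "g \<in> carrier (Gp n l)" using g(1) by (simp add: Hinv_def)
      then show "y \<in> Hinv n l i j" using Hinv_iso[OF p] g by blast
    qed
    show "Hinv n l i j \<subseteq> \<phi> ` Hinv n l i j"
    proof
      fix y assume y: "y \<in> Hinv n l i j"
      then have "y \<in> carrier (Gp n l)" by (simp add: Hinv_def)
      then obtain x where x: "x \<in> carrier (Gp n l)" "y = \<phi> x" using iso_facts(2)[OF p] by blast
      then have "x \<in> Hinv n l i j" using Hinv_iso[OF p x(1)] y by simp
      then show "y \<in> \<phi> ` Hinv n l i j" using x(2) by blast
    qed
  qed
qed


lemma restrict_eq_iff: "restrict f A = restrict h A \<longleftrightarrow> (\<forall>k\<in>A. f k = h k)"
  by (metis restrict_apply' restrict_ext)

lemma pow4_char: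
  assumes g: "g \<in> carrier (Gp n l)"
  shows "g [^]\<^bsub>Gp n l\<^esub> (4::nat) = \<one>\<^bsub>Gp n l\<^esub> \<longleftrightarrow> (\<forall>k<n. (2::int) ^ l k dvd 4 * g k)"
proof -
  have "g [^]\<^bsub>Gp n l\<^esub> (4::nat) = (\<lambda>k\<in>{..<n}. (4 * g k) mod 2 ^ l k)"
    using Gp_pow[OF g, of 4] by simp
  then show ?thesis by (simp add: Gp_one restrict_eq_iff dvd_eq_mod_eq_0) blast
qed

lemma pow2D_char:
  assumes g: "g \<in> carrier (Gp n l)"
  shows "g [^]\<^bsub>Gp n l\<^esub> (2::nat) \<in> Dset n l s \<longleftrightarrow> (\<forall>k<n. (2::int) ^ (min s (l k)) dvd 2 * g k)"
proof -
  have e: "g [^]\<^bsub>Gp n l\<^esub> (2::nat) = (\<lambda>k\<in>{..<n}. (2 * g k) mod 2 ^ l k)"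
    using Gp_pow[OF g, of 2] by simp
  have d: "(2::int) ^ (min s (l k)) dvd 2 ^ l k" for k by (rule le_imp_power_dvd) simp
  show ?thesis unfolding Dset_char using Gp_pow_closed[OF g, of 2]
    by (simp add: e dvd_mod_iff[OF d])
qed

definition Hc :: "nat \<Rightarrow> (nat \<Rightarrow> nat) \<Rightarrow> nat \<Rightarrow> nat \<Rightarrow> (nat \<Rightarrow> int) set" where
  "Hc n l i j = {g \<in> carrier (Gp n l).
     (\<forall>k<n. (2::int) ^ l k dvd 4 * g k \<and> (2::int) ^ (min (l i - 1) (l k)) dvd g k
        \<and> (2::int) ^ (min (l j - 1) (l k)) dvd 2 * g k)
     \<and> (2::int) ^ (l j - 1) dvd 2 ^ (l j - l i - 1) * g i + g j}"

lemma dvd_shift: "(2::int) ^ a dvd 2 ^ c * x \<Longrightarrow> c \<le> a \<Longrightarrow> 2 ^ (a - c) dvd x"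
proof -
  assume "(2::int) ^ a dvd 2 ^ c * x" "c \<le> a"
  moreover have "(2::int) ^ a = 2 ^ c * 2 ^ (a - c)" using \<open>c \<le> a\<close> by (simp flip: power_add)
  ultimately show ?thesis by simp
qed

lemma dvd_shift4: "(2::int) ^ a dvd 4 * x \<Longrightarrow> 2 \<le> a \<Longrightarrow> 2 ^ (a - 2) dvd x"
  using dvd_shift[of a 2 x] by simp

lemma dvd_shift2: "(2::int) ^ a dvd 2 * x \<Longrightarrow> 1 \<le> a \<Longrightarrow> 2 ^ (a - 1) dvd x"
  using dvd_shift[of a 1 x] by simp

lemma dvd_mono2: "(2::int) ^ b dvd x \<Longrightarrow> a \<le> b \<Longrightarrow> 2 ^ a dvd x"
  using dvd_trans le_imp_power_dvd by blast

lemma dvd_up: "(2::int) ^ a dvd x \<Longrightarrow> 2 ^ (a + 1) dvd 2 * x"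
  by simp

lemma even_cancel: "(2::int) ^ (p + 1) dvd 2 ^ p * x \<longleftrightarrow> 2 dvd x"
proof -
  have "(2::int) ^ (p + 1) = 2 ^ p * 2" by simp
  then show ?thesis by simp
qed

lemma coupling_lemma:
  fixes p q :: nat and a b :: int
  assumes "p < q"
  shows "((2::int) ^ (p + 1) dvd 2 ^ p * a \<longleftrightarrow> (2::int) ^ (q + 2) dvd 2 * (2 ^ q * b))
     \<longleftrightarrow> (2::int) ^ (q + 1) dvd 2 ^ (q - p) * (2 ^ p * a) + 2 ^ q * b"
proof -
  have 1: "(2::int) ^ (q + 2) dvd 2 * (2 ^ q * b) \<longleftrightarrow> 2 dvd b"
  proof -
    have e1: "(2::int) ^ (q + 2) = 2 ^ (q + 1) * 2" by simp
    have e2: "2 * (2 ^ q * b) = (2::int) ^ (q + 1) * b" by simp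
    have "((2::int) ^ (q + 1) * 2 dvd 2 ^ (q + 1) * b) \<longleftrightarrow> 2 dvd b"
      by (rule dvd_times_left_cancel_iff) simp
    then show ?thesis by (simp only: e1 e2)
  qed
  have 2: "(2::int) ^ (q - p) * (2 ^ p * a) + 2 ^ q * b = 2 ^ q * (a + b)"
  proof -
    have "(2::int) ^ (q - p) * 2 ^ p = 2 ^ q" using assms by (simp flip: power_add)
    then have "(2::int) ^ (q - p) * (2 ^ p * a) = 2 ^ q * a" by (metis mult.assoc)
    then show ?thesis by (simp add: algebra_simps)
  qed
  show ?thesis unfolding even_cancel 1 2 even_cancel by auto
qed

lemma Hinv_eq:
  assumes i: "i < n" and j: "j < n" and li: "1 \<le> l i" and lij: "l i + 2 \<le> l j"
    and ui: "\<And>k. k < n \<Longrightarrow> l k = l i \<Longrightarrow> k = i"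
    and uj: "\<And>k. k < n \<Longrightarrow> l k = l j \<Longrightarrow> k = j"
  shows "Hinv n l i j = Hc n l i j"
proof (rule Set.set_eqI)
  fix g
  show "g \<in> Hinv n l i j \<longleftrightarrow> g \<in> Hc n l i j"
  proof (cases "g \<in> carrier (Gp n l)")
    case False
    then show ?thesis by (simp add: Hinv_def Hc_def)
  next
    case gc: True
    define C1 where "C1 = (\<forall>k<n. (2::int) ^ l k dvd 4 * g k)"
    define C2 where "C2 = (\<forall>k<n. (2::int) ^ (min (l i - 1) (l k)) dvd g k)"
    define C3 where "C3 = (\<forall>k<n. (2::int) ^ (min (l j - 1) (l k)) dvd 2 * g k)"
    define C where "C = (C1 \<and> C2 \<and> C3)"
    define C4 where "C4 = (\<forall>k<n. (2::int) ^ (min (l i) (l k)) dvd g k)"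
    define C5 where "C5 = (\<forall>k<n. (2::int) ^ (min (l j) (l k)) dvd 2 * g k)"
    define cp where "cp = ((2::int) ^ (l j - 1) dvd 2 ^ (l j - l i - 1) * g i + g j)"
    have e1: "g [^]\<^bsub>Gp n l\<^esub> (4::nat) = \<one>\<^bsub>Gp n l\<^esub> \<longleftrightarrow> C1"
      unfolding C1_def by (rule pow4_char[OF gc])
    have e2: "g \<in> Dset n l (l i - 1) \<longleftrightarrow> C2" unfolding C2_def Dset_char using gc by simp
    have e3: "g [^]\<^bsub>Gp n l\<^esub> (2::nat) \<in> Dset n l (l j - 1) \<longleftrightarrow> C3"
      unfolding C3_def by (rule pow2D_char[OF gc])
    have e4: "g \<in> Dset n l (l i) \<longleftrightarrow> C4" unfolding C4_def Dset_char using gc by simp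
    have e5: "g [^]\<^bsub>Gp n l\<^esub> (2::nat) \<in> Dset n l (l j) \<longleftrightarrow> C5"
      unfolding C5_def by (rule pow2D_char[OF gc])
    have HI: "g \<in> Hinv n l i j \<longleftrightarrow> C \<and> (C4 \<longleftrightarrow> C5)"
      unfolding Hinv_def C_def using gc e1 e2 e3 e4 e5 by simp
    have HCa: "(\<forall>k<n. (2::int) ^ l k dvd 4 * g k \<and> (2::int) ^ (min (l i - 1) (l k)) dvd g k
        \<and> (2::int) ^ (min (l j - 1) (l k)) dvd 2 * g k) \<longleftrightarrow> C"
      unfolding C_def C1_def C2_def C3_def by blast
    have HC: "g \<in> Hc n l i j \<longleftrightarrow> C \<and> cp"
      unfolding Hc_def cp_def using gc HCa by simp
    have c4: "C4 \<longleftrightarrow> (2::int) ^ l i dvd g i" if C: C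
    proof
      assume C4 then have "(2::int) ^ (min (l i) (l i)) dvd g i" using i unfolding C4_def by blast
      then show "(2::int) ^ l i dvd g i" by simp
    next
      assume gi: "(2::int) ^ l i dvd g i"
      show C4 unfolding C4_def
      proof (intro allI impI)
        fix k assume k: "k < n"
        have c1: "(2::int) ^ l k dvd 4 * g k" and c2: "(2::int) ^ (min (l i - 1) (l k)) dvd g k"
          and c3: "(2::int) ^ (min (l j - 1) (l k)) dvd 2 * g k"
          using C k unfolding C_def C1_def C2_def C3_def by blast+
        show "(2::int) ^ (min (l i) (l k)) dvd g k"
        proof (cases "k = i")
          case True then show ?thesis using gi by simp
        next
          case False
          then have ne: "l k \<noteq> l i" using ui k by blast
          show ?thesis
          proof (cases "l k < l i")
            case True
            then have "min (l i - 1) (l k) = l k" "min (l i) (l k) = l k" by auto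
            then show ?thesis using c2 by simp
          next
            case False
            then have gt: "l i < l k" using ne by simp
            then have mi: "min (l i) (l k) = l i" by simp
            show ?thesis
            proof (cases "l k < l j")
              case True
              then have "min (l j - 1) (l k) = l k" by simp
              then have "(2::int) ^ (l k - 1) dvd g k" using c3 dvd_shift2 gt by simp
              then show ?thesis unfolding mi by (rule dvd_mono2) (use gt in simp)
            next
              case False
              then have "(2::int) ^ (l k - 2) dvd g k" using c1 dvd_shift4 lij by simp
              then show ?thesis unfolding mi by (rule dvd_mono2) (use False lij in simp)
            qed
          qed
        qed
      qed
    qed
    have c5: "C5 \<longleftrightarrow> (2::int) ^ l j dvd 2 * g j" if C: C
    proof
      assume C5 then have "(2::int) ^ (min (l j) (l j)) dvd 2 * g j" using j unfolding C5_def by blast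
      then show "(2::int) ^ l j dvd 2 * g j" by simp
    next
      assume gj: "(2::int) ^ l j dvd 2 * g j"
      show C5 unfolding C5_def
      proof (intro allI impI)
        fix k assume k: "k < n"
        have c1: "(2::int) ^ l k dvd 4 * g k"
          and c3: "(2::int) ^ (min (l j - 1) (l k)) dvd 2 * g k"
          using C k unfolding C_def C1_def C2_def C3_def by blast+
        show "(2::int) ^ (min (l j) (l k)) dvd 2 * g k"
        proof (cases "k = j")
          case True then show ?thesis using gj by simp
        next
          case False
          then have ne: "l k \<noteq> l j" using uj k by blast
          show ?thesis
          proof (cases "l k < l j")
            case True
            then have "min (l j - 1) (l k) = l k" "min (l j) (l k) = l k" by auto
            then show ?thesis using c3 by simp
          next
            case False
            then have gt: "l j < l k" using ne by simp
            then have mi: "min (l j) (l k) = l j" by simp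
            have "(2::int) ^ (l k - 2) dvd g k" using c1 dvd_shift4 gt lij by simp
            then have "(2::int) ^ (l k - 2 + 1) dvd 2 * g k" by (rule dvd_up)
            then show ?thesis unfolding mi by (rule dvd_mono2) (use gt in simp)
          qed
        qed
      qed
    qed
    have cpl: "((2::int) ^ l i dvd g i \<longleftrightarrow> (2::int) ^ l j dvd 2 * g j) \<longleftrightarrow> cp" if C: C
    proof -
      have c2: "(2::int) ^ (min (l i - 1) (l i)) dvd g i" using C i unfolding C_def C2_def by blast
      have c1: "(2::int) ^ l j dvd 4 * g j" using C j unfolding C_def C1_def by blast
      obtain p where p: "l i = p + 1" using li by (metis le_add_diff_inverse2)
      obtain q where q: "l j = q + 2" using lij by (metis add.commute le_add2 le_add_diff_inverse order_trans)
      have pq: "p < q" using p q lij by simp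
      have "(2::int) ^ p dvd g i" using c2 p by simp
      then obtain a where a: "g i = 2 ^ p * a" by blast
      have "(2::int) ^ q dvd g j" using dvd_shift4[OF c1] q by simp
      then obtain b where b: "g j = 2 ^ q * b" by blast
      have e1: "l j - 1 = q + 1" "l j - l i - 1 = q - p" using p q by auto
      show ?thesis unfolding cp_def e1 using coupling_lemma[OF pq, of a b] a b p q by simp
    qed
    show ?thesis
    proof (cases C)
      case True
      then show ?thesis using HI HC c4 c5 cpl by simp
    next
      case False
      then show ?thesis using HI HC by simp
    qed
  qed
qed


lemma modlin1: "(M::int) dvd c * K \<Longrightarrow> (M dvd c * (z mod K) + w \<longleftrightarrow> M dvd c * z + w)"
proof -
  assume a: "M dvd c * K"
  have zk: "z mod K = z - K * (z div K)" by (simp add: minus_mult_div_eq_mod)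
  have e: "c * (z mod K) + w = (c * z + w) + (- (z div K)) * (c * K)" by (simp add: zk algebra_simps)
  have "M dvd (- (z div K)) * (c * K)" using a by simp
  then show ?thesis unfolding e by (rule dvd_add_left_iff)
qed

lemma modlin0: "(M::int) dvd c * K \<Longrightarrow> (M dvd c * (z mod K) \<longleftrightarrow> M dvd c * z)"
  using modlin1[of M c K z 0] by simp

lemma modlin2: "(M::int) dvd K \<Longrightarrow> (M dvd t + z mod K \<longleftrightarrow> M dvd t + z)"
  using modlin1[of M 1 K z t] by (simp add: add.commute)

lemma Hc_subgroup:
  assumes i: "i < n" and j: "j < n" and lij: "l i + 2 \<le> l j"
  shows "subgroup (Hc n l i j) (Gp n l)"
proof (rule group.subgroupI[OF Gp_group])
  show "Hc n l i j \<subseteq> carrier (Gp n l)" by (auto simp: Hc_def)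
  define e where "e = l j - l i - 1"
  have "e + l i = l j - 1" using lij by (simp add: e_def)
  then have "(2::int) ^ e * 2 ^ (l i) = 2 ^ (l j - 1)" by (metis power_add)
  then have cK: "(2::int) ^ (l j - 1) dvd 2 ^ e * 2 ^ (l i)" by simp
  have dK: "(2::int) ^ (l j - 1) dvd 2 ^ (l j)" by (rule le_imp_power_dvd) simp
  have mk: "(2::int) ^ (min x (l k)) dvd 2 ^ (l k)" for x k by (rule le_imp_power_dvd) simp
  have "\<one>\<^bsub>Gp n l\<^esub> \<in> Hc n l i j"
    unfolding Hc_def using i j monoid.one_closed[OF Gp_monoid] by (simp add: Gp_one)
  then show "Hc n l i j \<noteq> {}" by blast
  show "inv\<^bsub>Gp n l\<^esub> a \<in> Hc n l i j" if a: "a \<in> Hc n l i j" for a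
  proof -
    have ac: "a \<in> carrier (Gp n l)" using a by (simp add: Hc_def)
    have A: "\<And>k. k < n \<Longrightarrow> (2::int) ^ l k dvd 4 * a k \<and> (2::int) ^ (min (l i - 1) (l k)) dvd a k
        \<and> (2::int) ^ (min (l j - 1) (l k)) dvd 2 * a k"
      and Acp: "(2::int) ^ (l j - 1) dvd 2 ^ e * a i + a j" using a by (auto simp: Hc_def e_def)
    have iak: "\<And>k. k < n \<Longrightarrow> (inv\<^bsub>Gp n l\<^esub> a) k = (- a k) mod 2 ^ l k" using Gp_inv[OF ac] by simp
    have ic: "inv\<^bsub>Gp n l\<^esub> a \<in> carrier (Gp n l)" by (rule group.inv_closed[OF Gp_group ac])
    have B: "(2::int) ^ l k dvd 4 * (inv\<^bsub>Gp n l\<^esub> a) k \<and> (2::int) ^ (min (l i - 1) (l k)) dvd (inv\<^bsub>Gp n l\<^esub> a) k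
        \<and> (2::int) ^ (min (l j - 1) (l k)) dvd 2 * (inv\<^bsub>Gp n l\<^esub> a) k" if k: "k < n" for k
    proof -
      have 1: "(2::int) ^ l k dvd 4 * ((- a k) mod 2 ^ l k) \<longleftrightarrow> (2::int) ^ l k dvd 4 * (- a k)"
        by (rule modlin0) simp
      have 2: "(2::int) ^ (min (l i - 1) (l k)) dvd (- a k) mod 2 ^ l k \<longleftrightarrow> (2::int) ^ (min (l i - 1) (l k)) dvd - a k"
        by (rule dvd_mod_iff[OF mk])
      have 3: "(2::int) ^ (min (l j - 1) (l k)) dvd 2 * ((- a k) mod 2 ^ l k) \<longleftrightarrow> (2::int) ^ (min (l j - 1) (l k)) dvd 2 * (- a k)"
        by (rule modlin0) (rule dvd_mult[OF mk])
      show ?thesis unfolding iak[OF k] 1 2 3 using A[OF k] by simp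
    qed
    have 4: "(2::int) ^ (l j - 1) dvd 2 ^ e * ((- a i) mod 2 ^ l i) + ((- a j) mod 2 ^ l j)
        \<longleftrightarrow> (2::int) ^ (l j - 1) dvd 2 ^ e * (- a i) + (- a j)"
      using modlin1[OF cK, of "- a i" "(- a j) mod 2 ^ l j"] modlin2[OF dK, of "2 ^ e * (- a i)" "- a j"] by simp
    have 5: "(2::int) ^ e * (- a i) + (- a j) = - (2 ^ e * a i + a j)" by simp
    have Bcp: "(2::int) ^ (l j - 1) dvd 2 ^ e * (inv\<^bsub>Gp n l\<^esub> a) i + (inv\<^bsub>Gp n l\<^esub> a) j"
      unfolding iak[OF i] iak[OF j] 4 5 dvd_minus_iff by (rule Acp)
    show ?thesis using ic B Bcp unfolding Hc_def e_def by simp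
  qed
  show "a \<otimes>\<^bsub>Gp n l\<^esub> b \<in> Hc n l i j" if a: "a \<in> Hc n l i j" and b: "b \<in> Hc n l i j" for a b
  proof -
    have ac: "a \<in> carrier (Gp n l)" using a by (simp add: Hc_def)
    have bc: "b \<in> carrier (Gp n l)" using b by (simp add: Hc_def)
    have A: "\<And>k. k < n \<Longrightarrow> (2::int) ^ l k dvd 4 * a k \<and> (2::int) ^ (min (l i - 1) (l k)) dvd a k
        \<and> (2::int) ^ (min (l j - 1) (l k)) dvd 2 * a k"
      and Acp: "(2::int) ^ (l j - 1) dvd 2 ^ e * a i + a j" using a by (auto simp: Hc_def e_def)
    have Bb: "\<And>k. k < n \<Longrightarrow> (2::int) ^ l k dvd 4 * b k \<and> (2::int) ^ (min (l i - 1) (l k)) dvd b k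
        \<and> (2::int) ^ (min (l j - 1) (l k)) dvd 2 * b k"
      and Bcp: "(2::int) ^ (l j - 1) dvd 2 ^ e * b i + b j" using b by (auto simp: Hc_def e_def)
    have mk': "\<And>k. k < n \<Longrightarrow> (a \<otimes>\<^bsub>Gp n l\<^esub> b) k = (a k + b k) mod 2 ^ l k" by (simp add: Gp_mult)
    have abc: "a \<otimes>\<^bsub>Gp n l\<^esub> b \<in> carrier (Gp n l)" by (rule monoid.m_closed[OF Gp_monoid ac bc])
    have B: "(2::int) ^ l k dvd 4 * (a \<otimes>\<^bsub>Gp n l\<^esub> b) k \<and> (2::int) ^ (min (l i - 1) (l k)) dvd (a \<otimes>\<^bsub>Gp n l\<^esub> b) k
        \<and> (2::int) ^ (min (l j - 1) (l k)) dvd 2 * (a \<otimes>\<^bsub>Gp n l\<^esub> b) k" if k: "k < n" for k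
    proof -
      have 1: "(2::int) ^ l k dvd 4 * ((a k + b k) mod 2 ^ l k) \<longleftrightarrow> (2::int) ^ l k dvd 4 * (a k + b k)"
        by (rule modlin0) simp
      have 2: "(2::int) ^ (min (l i - 1) (l k)) dvd (a k + b k) mod 2 ^ l k \<longleftrightarrow> (2::int) ^ (min (l i - 1) (l k)) dvd a k + b k"
        by (rule dvd_mod_iff[OF mk])
      have 3: "(2::int) ^ (min (l j - 1) (l k)) dvd 2 * ((a k + b k) mod 2 ^ l k) \<longleftrightarrow> (2::int) ^ (min (l j - 1) (l k)) dvd 2 * (a k + b k)"
        by (rule modlin0) (rule dvd_mult[OF mk])
      show ?thesis unfolding mk'[OF k] 1 2 3 distrib_left using A[OF k] Bb[OF k] by (simp add: dvd_add)
    qed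
    have 4: "(2::int) ^ (l j - 1) dvd 2 ^ e * ((a i + b i) mod 2 ^ l i) + ((a j + b j) mod 2 ^ l j)
        \<longleftrightarrow> (2::int) ^ (l j - 1) dvd 2 ^ e * (a i + b i) + (a j + b j)"
      using modlin1[OF cK, of "a i + b i" "(a j + b j) mod 2 ^ l j"] modlin2[OF dK, of "2 ^ e * (a i + b i)" "a j + b j"] by simp
    have 5: "(2::int) ^ e * (a i + b i) + (a j + b j) = (2 ^ e * a i + a j) + (2 ^ e * b i + b j)"
      by (simp add: algebra_simps)
    have Ccp: "(2::int) ^ (l j - 1) dvd 2 ^ e * (a \<otimes>\<^bsub>Gp n l\<^esub> b) i + (a \<otimes>\<^bsub>Gp n l\<^esub> b) j"
      unfolding mk'[OF i] mk'[OF j] 4 5 using Acp Bcp by (rule dvd_add)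
    show ?thesis using abc B Ccp unfolding Hc_def e_def by simp
  qed
qed

lemma p4dvd: "a \<le> b + 2 \<Longrightarrow> (2::int) ^ a dvd 4 * 2 ^ b"
proof -
  assume "a \<le> b + 2"
  then have "(2::int) ^ a dvd 2 ^ (b + 2)" by (rule le_imp_power_dvd)
  moreover have "(2::int) ^ (b + 2) = 4 * 2 ^ b" by (simp add: power_add)
  ultimately show ?thesis by simp
qed

lemma p2dvd: "a \<le> b + 1 \<Longrightarrow> (2::int) ^ a dvd 2 * 2 ^ b"
proof -
  assume "a \<le> b + 1"
  then have "(2::int) ^ a dvd 2 ^ (b + 1)" by (rule le_imp_power_dvd)
  then show ?thesis by simp
qed

lemma cond_irregular:
  assumes ij: "i < j" and j: "j < n" and lij: "l i + 2 \<le> l j" and li: "1 \<le> l i"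
    and ci: "card {k. k < n \<and> l k = l i} = 1" and cj: "card {k. k < n \<and> l k = l j} = 1"
  shows "\<exists>H. characteristic H (Gp n l) \<and> \<not> regular n l H"
proof -
  have i: "i < n" using ij j by simp
  have ne: "i \<noteq> j" using ij by simp
  have ui: "k = i" if "k < n" "l k = l i" for k
  proof -
    obtain x where x: "{k. k < n \<and> l k = l i} = {x}" using ci by (rule card_1_singletonE)
    have a1: "i \<in> {k. k < n \<and> l k = l i}" using i by simp
    have a2: "k \<in> {k. k < n \<and> l k = l i}" using that by simp
    have "i \<in> {x}" using a1 unfolding x .
    moreover have "k \<in> {x}" using a2 unfolding x .
    ultimately show ?thesis by simp
  qed
  have uj: "k = j" if "k < n" "l k = l j" for k
  proof -
    obtain x where x: "{k. k < n \<and> l k = l j} = {x}" using cj by (rule card_1_singletonE)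
    have a1: "j \<in> {k. k < n \<and> l k = l j}" using j by simp
    have a2: "k \<in> {k. k < n \<and> l k = l j}" using that by simp
    have "j \<in> {x}" using a1 unfolding x .
    moreover have "k \<in> {x}" using a2 unfolding x .
    ultimately show ?thesis by simp
  qed
  have eq: "Hinv n l i j = Hc n l i j" by (rule Hinv_eq[OF i j li lij ui uj])
  have sg: "subgroup (Hinv n l i j) (Gp n l)" unfolding eq by (rule Hc_subgroup[OF i j lij])
  have ch: "characteristic (Hinv n l i j) (Gp n l)" by (rule Hinv_char[OF sg])
  have nr: "\<not> regular n l (Hinv n l i j)"
  proof
    assume "regular n l (Hinv n l i j)"
    then obtain a where a1: "\<forall>k<n. a k \<le> l k" and a2: "Hinv n l i j = Rset n l a"
      unfolding regular_def by blast
    have "Rset n l a = {g \<in> carrier (Gp n l). \<forall>k<n. (2::int) ^ (l k - a k) dvd g k}"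
      by (rule Rset_char) (use a1 in blast)
    then have R: "Hc n l i j = {g \<in> carrier (Gp n l). \<forall>k<n. (2::int) ^ (l k - a k) dvd g k}"
      using eq a2 by simp
    define p where "p = l i - 1"
    define q where "q = l j - 2"
    have p: "l i = p + 1" using li by (simp add: p_def)
    have q: "l j = q + 2" using lij by (simp add: q_def)
    have pq: "p < q" using p q lij by simp
    have qp: "(2::int) ^ (q - p) * 2 ^ p = 2 ^ q" using pq by (simp flip: power_add)
    define g1 where "g1 = (\<lambda>k\<in>{..<n}. if k = i then (2::int) ^ p else if k = j then 2 ^ q else 0)"
    define g2 where "g2 = (\<lambda>k\<in>{..<n}. if k = i then (2::int) ^ p else 0)"
    have lt1: "(2::int) ^ p < 2 ^ l i" using p by simp
    have lt2: "(2::int) ^ q < 2 ^ l j" using q by simp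
    have g1c: "g1 \<in> carrier (Gp n l)" unfolding g1_def
      by (rule Gp_carrierI) (simp add: lt1 lt2)
    have g2c: "g2 \<in> carrier (Gp n l)" unfolding g2_def
      by (rule Gp_carrierI) (simp add: lt1)
    have e1: "l i - 1 = p" "l j - 1 = q + 1" "l j - l i - 1 = q - p" using p q pq by auto
    have g1H: "g1 \<in> Hc n l i j"
    proof -
      have "(2::int) ^ l k dvd 4 * g1 k \<and> (2::int) ^ (min (l i - 1) (l k)) dvd g1 k
        \<and> (2::int) ^ (min (l j - 1) (l k)) dvd 2 * g1 k" if k: "k < n" for k
      proof (cases "k = i")
        case True
        have gk: "g1 k = 2 ^ p" using True k by (simp add: g1_def)
        have lk: "l k = p + 1" using True p by simp
        have m1: "min (l i - 1) (l k) = p" using lk e1 by simp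
        have m2: "min (l j - 1) (l k) = p + 1" using lk e1 pq by simp
        have "(2::int) ^ (p + 1) dvd 4 * 2 ^ p" by (rule p4dvd) simp
        moreover have "(2::int) ^ (p + 1) dvd 2 * 2 ^ p" by (rule p2dvd) simp
        ultimately show ?thesis unfolding m1 m2 unfolding gk lk by simp
      next
        case ki: False
        show ?thesis
        proof (cases "k = j")
          case True
          have gk: "g1 k = 2 ^ q" using True ki k by (simp add: g1_def)
          have lk: "l k = q + 2" using True q by simp
          have m1: "min (l i - 1) (l k) = p" using lk e1 pq by simp
          have m2: "min (l j - 1) (l k) = q + 1" using lk e1 by simp
          have "(2::int) ^ p dvd 2 ^ q" using pq by (simp add: le_imp_power_dvd)
          moreover have "(2::int) ^ (q + 2) dvd 4 * 2 ^ q" by (rule p4dvd) simp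
          moreover have "(2::int) ^ (q + 1) dvd 2 * 2 ^ q" by (rule p2dvd) simp
          ultimately show ?thesis unfolding m1 m2 unfolding gk lk by simp
        next
          case False
          then have "g1 k = 0" using ki k by (simp add: g1_def)
          then show ?thesis by simp
        qed
      qed
      moreover have "(2::int) ^ (l j - 1) dvd 2 ^ (l j - l i - 1) * g1 i + g1 j"
      proof -
        have "g1 i = 2 ^ p" "g1 j = 2 ^ q" using i j ne by (simp_all add: g1_def)
        then have eqv: "2 ^ (l j - l i - 1) * g1 i + g1 j = (2::int) ^ (q + 1)" unfolding e1 using qp by simp
        show ?thesis unfolding eqv unfolding e1 by simp
      qed
      ultimately show ?thesis using g1c by (simp add: Hc_def)
    qed
    have g2H: "g2 \<notin> Hc n l i j"
    proof
      assume "g2 \<in> Hc n l i j"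
      then have "(2::int) ^ (l j - 1) dvd 2 ^ (l j - l i - 1) * g2 i + g2 j" by (simp add: Hc_def)
      moreover have "g2 i = 2 ^ p" "g2 j = 0" using i j ne by (simp_all add: g2_def)
      ultimately have "(2::int) ^ (q + 1) dvd 2 ^ q" unfolding e1 using qp by simp
      then have "(2::int) ^ (q + 1) \<le> 2 ^ q" by (rule zdvd_imp_le) simp
      moreover have "(2::int) ^ q < 2 ^ (q + 1)" by simp
      ultimately show False by linarith
    qed
    have "\<forall>k<n. (2::int) ^ (l k - a k) dvd g1 k" using g1H R by blast
    have "\<forall>k<n. (2::int) ^ (l k - a k) dvd g2 k"
    proof (intro allI impI)
      fix k assume k: "k < n"
      show "(2::int) ^ (l k - a k) dvd g2 k"
      proof (cases "k = i")
        case True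
        then have "g2 k = g1 k" using k by (simp add: g1_def g2_def)
        then show ?thesis using \<open>\<forall>k<n. (2::int) ^ (l k - a k) dvd g1 k\<close> k by simp
      next
        case False
        then have "g2 k = 0" using k by (simp add: g2_def)
        then show ?thesis by simp
      qed
    qed
    then have "g2 \<in> Hc n l i j" using R g2c by blast
    then show False using g2H by blast
  qed
  show ?thesis using ch nr by blast
qed

theorem mainTheorem12:
  fixes n :: nat and l :: "nat \<Rightarrow> nat"
  assumes pos: "\<And>i. i < n \<Longrightarrow> 1 \<le> l i"
    and sorted: "\<And>i j. i \<le> j \<Longrightarrow> j < n \<Longrightarrow> l i \<le> l j"
  shows "(\<exists>H. characteristic H (Gp n l) \<and> \<not> regular n l H) \<longleftrightarrow>
         (\<exists>i j. i < j \<and> j < n \<and> l i + 2 \<le> l j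
            \<and> card {k. k < n \<and> l k = l i} = 1 \<and> card {k. k < n \<and> l k = l j} = 1)"
proof
  assume "\<exists>H. characteristic H (Gp n l) \<and> \<not> regular n l H"
  then obtain H where H: "characteristic H (Gp n l)" "\<not> regular n l H" by blast
  show "\<exists>i j. i < j \<and> j < n \<and> l i + 2 \<le> l j
            \<and> card {k. k < n \<and> l k = l i} = 1 \<and> card {k. k < n \<and> l k = l j} = 1"
  proof (rule ccontr)
    assume nc: "\<not> (\<exists>i j. i < j \<and> j < n \<and> l i + 2 \<le> l j
            \<and> card {k. k < n \<and> l k = l i} = 1 \<and> card {k. k < n \<and> l k = l j} = 1)"
    show False using char_regular[OF H(1) sorted nc] H(2) by blast
  qed
next
  assume "\<exists>i j. i < j \<and> j < n \<and> l i + 2 \<le> l j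
            \<and> card {k. k < n \<and> l k = l i} = 1 \<and> card {k. k < n \<and> l k = l j} = 1"
  then obtain i j where ij: "i < j" "j < n" "l i + 2 \<le> l j"
    "card {k. k < n \<and> l k = l i} = 1" "card {k. k < n \<and> l k = l j} = 1" by blast
  have "1 \<le> l i" using pos ij by simp
  then show "\<exists>H. characteristic H (Gp n l) \<and> \<not> regular n l H"
    using cond_irregular[OF ij(1,2,3) _ ij(4,5)] by blast
qed

end
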